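(* Let $Q$ be a QNP, let $P=T_D(Q)$ be its direct translation, and let $\pi$ be a policy for $Q$ (and thus also for $P$). The following are equivalent: (1) $\pi$ solves $Q$; (2) $\pi$ is a strong cyclic solution of $Q$ and $\pi$ is $Q$-terminating; (3) $\pi$ is a strong cyclic solution of $P$ and $\pi$ is $P$-terminating.
   Context: A qualitative numerical problem (QNP) is a tuple $Q=\langle F,V,I,O,G\rangle$ where $F$ is a finite set of propositional variables and $V$ a finite set of numerical variables taking non-negative real values. $F$-literals are $p,\neg p$; $V$-literals are $X=0$ and $X>0$. $I$, $G$ are consistent sets of literals. Each action $a\in O$ has a precondition $Pre(a)$ (set of literals), propositional effects $\mathit{Eff}(a)$ (set of $F$-literals) and numerical effects $N(a)$ (atoms $Inc(X)$, $Dec(X)$, at most one per variable); if $Dec(X)\in N(a)$ then $X>0\in Pre(a)$. A state $s$ assigns truth values to $F$ and reals $s[X]\ge0$ to $V$; initial states satisfy $I$ under a closed-world assumption; goal states satisfy $G$. For $a$ applicable in $s$ ($s$ satisfies $Pre(a)$), $s'\in F(a,s)$ iff propositional effects are applied (others unchanged), $s'[X]>s[X]$ if $Inc(X)\in N(a)$, $s'[X]<s[X]$ if $Dec(X)\in N(a)$, $s'[X]=s[X]$ otherwise. For $\epsilon>0$, an $\epsilon$-sequence is $s_0,a_0,s_1,\dots$ with $a_i$ applicable, $s_{i+1}\in F(a_i,s_i)$ and, for all $X,i$, $s_{i+1}[X]\neq s_i[X]$ implying $|s_{i+1}[X]-s_i[X]|\ge\epsilon$ or $0=s_{i+1}[X]<s_i[X]<\epsilon$;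 trajectories of $Q$ are $\epsilon$-sequences for some $\epsilon>0$ (an $\epsilon$-trajectory if it starts at an initial state). The boolean state $\bar s$ is the truth valuation on atoms $p\in F$ and $X=0$. A policy is a partial map $\pi$ from states to actions with $\pi(s)=\pi(s')$ whenever $\bar s=\bar s'$; a $\pi$-trajectory has $a_i=\pi(s_i)$; it is maximal if it is infinite with no goal state, or ends at its first goal state, or ends at $s_n$ with $\pi(s_n)$ undefined or not applicable. $\pi$ solves $Q$ iff for every $\epsilon>0$ all maximal $\epsilon$-$\pi$-trajectories from initial states reach a goal state. $\pi$ is a strong cyclic solution of $Q$ iff for every $\pi$-trajectory from an initial state to $s$ there is a $\pi$-trajectory from $s$ to a goal state. $\pi$ is $Q$-terminating iff all $\pi$-trajectories from initial states are finite. $T_D(Q)$ is the FOND problem over $F\cup\{p_{X=0}:X\in V\}$ obtained by reading $X=0$ as $p_{X=0}$, $X>0$ as $\neg p_{X=0}$ in $I$, $G$, preconditions, keeping propositional effects, replacing $Inc(X)$ by the deterministic effect $\neg p_{X=0}$ and $Dec(X)$ by the nondeterministic effect $\neg p_{X=0}\mid p_{X=0}$; its states are the boolean states, it has a unique initial state, and $\pi$ acts via $\bar s\mapsto\pi(s)$. A $\pi$-trajectory of $T_D(Q)$ is a sequence with $\pi(\bar s_i)$ applicable and $\bar s_{i+1}$ a possible successor; $\pi$ is a strong cyclic solution of $T_D(Q)$ iff for every $\pi$-trajectory from the initial state to $\bar s$ there is a $\pi$-trajectory from $\bar s$ to a goal state. $Dec(X)$/$Inc(X)$ actions of $T_D(Q)$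 are those coming from actions of $Q$ with $Dec(X)$/$Inc(X)$ in $N(a)$. An infinite $\pi$-trajectory of $T_D(Q)$ is terminating if for some $X\in V$, $\pi(\bar s)$ is a $Dec(X)$ action for some state $\bar s$ occurring infinitely often and $\pi(\bar s')$ is not an $Inc(X)$ action for any state occurring infinitely often. $\pi$ is $P$-terminating iff all infinite $\pi$-trajectories of $P$ from its initial state are terminating. *)

theory Defs
  imports Main "HOL-Library.Extended_Nat"
begin

datatype ('f, 'v) lit = PosF 'f | NegF 'f | Zero 'v | Pos 'v

datatype neff = Inc | Dec

text \<open>A QNP.  Numerical effects are a partial map from variables to Inc/Dec,
  which encodes "at most one atom per variable".\<close>
record ('f, 'v, 'a) qnp =
  Fs   :: "'f set"
  Vs   :: "'v set"
  Init :: "('f, 'v) lit set"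
  Ops  :: "'a set"
  Goal :: "('f, 'v) lit set"
  Pre  :: "'a \<Rightarrow> ('f, 'v) lit set"
  Eff  :: "'a \<Rightarrow> ('f, 'v) lit set"
  Num  :: "'a \<Rightarrow> 'v \<Rightarrow> neff option"

fun lit_over :: "'f set \<Rightarrow> 'v set \<Rightarrow> ('f, 'v) lit \<Rightarrow> bool" where
  "lit_over F V (PosF p) = (p \<in> F)"
| "lit_over F V (NegF p) = (p \<in> F)"
| "lit_over F V (Zero X) = (X \<in> V)"
| "lit_over F V (Pos X) = (X \<in> V)"

fun is_Flit :: "('f, 'v) lit \<Rightarrow> bool" where
  "is_Flit (PosF p) = True"
| "is_Flit (NegF p) = True"
| "is_Flit _ = False"

definition consistent :: "('f, 'v) lit set \<Rightarrow> bool" where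
  "consistent L \<longleftrightarrow> (\<forall>p. \<not> (PosF p \<in> L \<and> NegF p \<in> L)) \<and> (\<forall>X. \<not> (Zero X \<in> L \<and> Pos X \<in> L))"

definition wf_qnp :: "('f, 'v, 'a) qnp \<Rightarrow> bool" where
  "wf_qnp Q \<longleftrightarrow>
     finite (Fs Q) \<and> finite (Vs Q) \<and>
     (\<forall>l \<in> Init Q. lit_over (Fs Q) (Vs Q) l) \<and> consistent (Init Q) \<and>
     (\<forall>l \<in> Goal Q. lit_over (Fs Q) (Vs Q) l) \<and> consistent (Goal Q) \<and>
     (\<forall>a \<in> Ops Q.
        (\<forall>l \<in> Pre Q a. lit_over (Fs Q) (Vs Q) l) \<and>
        (\<forall>l \<in> Eff Q a. is_Flit l \<and> lit_over (Fs Q) (Vs Q) l) \<and> consistent (Eff Q a) \<and>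
        (\<forall>X. Num Q a X \<noteq> None \<longrightarrow> X \<in> Vs Q) \<and>
        (\<forall>X. Num Q a X = Some Dec \<longrightarrow> Pos X \<in> Pre Q a))"

text \<open>A state: truth values of the propositional variables and non-negative reals for the
  numerical variables (canonically False / 0 outside F / V).\<close>
type_synonym ('f, 'v) state = "('f \<Rightarrow> bool) \<times> ('v \<Rightarrow> real)"

definition is_state :: "('f, 'v, 'a) qnp \<Rightarrow> ('f, 'v) state \<Rightarrow> bool" where
  "is_state Q s \<longleftrightarrow> (\<forall>p. p \<notin> Fs Q \<longrightarrow> \<not> fst s p) \<and> (\<forall>X. X \<notin> Vs Q \<longrightarrow> snd s X = 0)
     \<and> (\<forall>X. snd s X \<ge> 0)"

fun holds :: "('f, 'v) state \<Rightarrow> ('f, 'v) lit \<Rightarrow> bool" where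
  "holds s (PosF p) = fst s p"
| "holds s (NegF p) = (\<not> fst s p)"
| "holds s (Zero X) = (snd s X = 0)"
| "holds s (Pos X) = (snd s X > 0)"

definition applicable :: "('f, 'v, 'a) qnp \<Rightarrow> 'a \<Rightarrow> ('f, 'v) state \<Rightarrow> bool" where
  "applicable Q a s \<longleftrightarrow> (\<forall>l \<in> Pre Q a. holds s l)"

definition is_goal :: "('f, 'v, 'a) qnp \<Rightarrow> ('f, 'v) state \<Rightarrow> bool" where
  "is_goal Q s \<longleftrightarrow> (\<forall>l \<in> Goal Q. holds s l)"

text \<open>Initial states: satisfy I under the closed-world assumption (an atom p, resp. X = 0,
  is true iff it appears positively in I).\<close>
definition is_init :: "('f, 'v, 'a) qnp \<Rightarrow> ('f, 'v) state \<Rightarrow> bool" where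
  "is_init Q s \<longleftrightarrow> is_state Q s \<and> (\<forall>l \<in> Init Q. holds s l) \<and>
     (\<forall>p \<in> Fs Q. fst s p \<longleftrightarrow> PosF p \<in> Init Q) \<and>
     (\<forall>X \<in> Vs Q. snd s X = 0 \<longleftrightarrow> Zero X \<in> Init Q)"

definition succ :: "('f, 'v, 'a) qnp \<Rightarrow> 'a \<Rightarrow> ('f, 'v) state \<Rightarrow> ('f, 'v) state \<Rightarrow> bool" where
  "succ Q a s s' \<longleftrightarrow> is_state Q s' \<and>
     (\<forall>p \<in> Fs Q. fst s' p = (if PosF p \<in> Eff Q a then True
                              else if NegF p \<in> Eff Q a then False else fst s p)) \<and>
     (\<forall>X \<in> Vs Q. (case Num Q a X of
                     Some Inc \<Rightarrow> snd s' X > snd s X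
                   | Some Dec \<Rightarrow> snd s' X < snd s X
                   | None \<Rightarrow> snd s' X = snd s X))"

definition eps_step :: "real \<Rightarrow> ('f, 'v) state \<Rightarrow> ('f, 'v) state \<Rightarrow> bool" where
  "eps_step \<epsilon> s s' \<longleftrightarrow> (\<forall>X. snd s' X \<noteq> snd s X \<longrightarrow>
      (\<bar>snd s' X - snd s X\<bar> \<ge> \<epsilon> \<or> (0 = snd s' X \<and> snd s' X < snd s X \<and> snd s X < \<epsilon>)))"

text \<open>A (finite or infinite) sequence s_0, a_0, s_1, ... is given by functions ss, as and a length
  n :: enat (states s_0..s_n; n = \<infinity> for infinite sequences).\<close>
definition eps_seq :: "('f, 'v, 'a) qnp \<Rightarrow> real \<Rightarrow> (nat \<Rightarrow> ('f, 'v) state) \<Rightarrow> (nat \<Rightarrow> 'a) \<Rightarrow> enat \<Rightarrow> bool" where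
  "eps_seq Q \<epsilon> ss as n \<longleftrightarrow>
     (\<forall>i. enat i \<le> n \<longrightarrow> is_state Q (ss i)) \<and>
     (\<forall>i. enat i < n \<longrightarrow> as i \<in> Ops Q \<and> applicable Q (as i) (ss i) \<and>
                         succ Q (as i) (ss i) (ss (Suc i)) \<and> eps_step \<epsilon> (ss i) (ss (Suc i)))"

definition trajectory :: "('f, 'v, 'a) qnp \<Rightarrow> (nat \<Rightarrow> ('f, 'v) state) \<Rightarrow> (nat \<Rightarrow> 'a) \<Rightarrow> enat \<Rightarrow> bool" where
  "trajectory Q ss as n \<longleftrightarrow> (\<exists>\<epsilon> > 0. eps_seq Q \<epsilon> ss as n)"

text \<open>Boolean state: truth of p (p \<in> F) and of the atoms X = 0 (X \<in> V);
  canonically False / True outside F / V.\<close>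
type_synonym ('f, 'v) bstate = "('f \<Rightarrow> bool) \<times> ('v \<Rightarrow> bool)"

definition bar :: "('f, 'v) state \<Rightarrow> ('f, 'v) bstate" where
  "bar s = (fst s, \<lambda>X. snd s X = 0)"

text \<open>A policy is a partial map from states to actions that only depends on the boolean
  state; we represent it by the induced partial map on boolean states, acting on a state s
  of Q as pi (bar s), and on the states of T_D(Q) directly.\<close>
type_synonym ('f, 'v, 'a) policy = "('f, 'v) bstate \<Rightarrow> 'a option"

definition is_policy :: "('f, 'v, 'a) qnp \<Rightarrow> ('f, 'v, 'a) policy \<Rightarrow> bool" where
  "is_policy Q \<pi> \<longleftrightarrow> (\<forall>b a. \<pi> b = Some a \<longrightarrow> a \<in> Ops Q)"

text \<open>pi-trajectory: a_i = pi(s_i); goal states are terminal (a pi-trajectory ends at the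
  first goal state it reaches).\<close>
definition pi_traj :: "('f, 'v, 'a) qnp \<Rightarrow> ('f, 'v, 'a) policy \<Rightarrow> (nat \<Rightarrow> ('f, 'v) state) \<Rightarrow> (nat \<Rightarrow> 'a) \<Rightarrow> enat \<Rightarrow> bool" where
  "pi_traj Q \<pi> ss as n \<longleftrightarrow> (\<forall>i. enat i < n \<longrightarrow> \<pi> (bar (ss i)) = Some (as i) \<and> \<not> is_goal Q (ss i))"

definition maximal :: "('f, 'v, 'a) qnp \<Rightarrow> ('f, 'v, 'a) policy \<Rightarrow> (nat \<Rightarrow> ('f, 'v) state) \<Rightarrow> enat \<Rightarrow> bool" where
  "maximal Q \<pi> ss n \<longleftrightarrow> n = \<infinity> \<or>
     (\<exists>m. n = enat m \<and> (is_goal Q (ss m) \<or> \<pi> (bar (ss m)) = None \<or>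
                         (\<exists>a. \<pi> (bar (ss m)) = Some a \<and> \<not> applicable Q a (ss m))))"

definition reaches_goal :: "('f, 'v, 'a) qnp \<Rightarrow> (nat \<Rightarrow> ('f, 'v) state) \<Rightarrow> enat \<Rightarrow> bool" where
  "reaches_goal Q ss n \<longleftrightarrow> (\<exists>i. enat i \<le> n \<and> is_goal Q (ss i))"

definition solves :: "('f, 'v, 'a) policy \<Rightarrow> ('f, 'v, 'a) qnp \<Rightarrow> bool" where
  "solves \<pi> Q \<longleftrightarrow> (\<forall>\<epsilon> > 0. \<forall>ss as n.
     eps_seq Q \<epsilon> ss as n \<and> is_init Q (ss 0) \<and> pi_traj Q \<pi> ss as n \<and> maximal Q \<pi> ss n
       \<longrightarrow> reaches_goal Q ss n)"

definition strong_cyclic_Q :: "('f, 'v, 'a) policy \<Rightarrow> ('f, 'v, 'a) qnp \<Rightarrow> bool" where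
  "strong_cyclic_Q \<pi> Q \<longleftrightarrow> (\<forall>ss as m.
     trajectory Q ss as (enat m) \<and> is_init Q (ss 0) \<and> pi_traj Q \<pi> ss as (enat m) \<longrightarrow>
     (\<exists>ss' as' k. trajectory Q ss' as' (enat k) \<and> pi_traj Q \<pi> ss' as' (enat k) \<and>
                  ss' 0 = ss m \<and> is_goal Q (ss' k)))"

definition Q_terminating :: "('f, 'v, 'a) policy \<Rightarrow> ('f, 'v, 'a) qnp \<Rightarrow> bool" where
  "Q_terminating \<pi> Q \<longleftrightarrow> (\<forall>ss as n.
     trajectory Q ss as n \<and> is_init Q (ss 0) \<and> pi_traj Q \<pi> ss as n \<longrightarrow> n \<noteq> \<infinity>)"

definition TD_state :: "('f, 'v, 'a) qnp \<Rightarrow> ('f, 'v) bstate \<Rightarrow> bool" where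
  "TD_state Q b \<longleftrightarrow> (\<forall>p. p \<notin> Fs Q \<longrightarrow> \<not> fst b p) \<and> (\<forall>X. X \<notin> Vs Q \<longrightarrow> snd b X)"

text \<open>X = 0 is read as the atom p_{X=0}, X > 0 as its negation.\<close>
fun bholds :: "('f, 'v) bstate \<Rightarrow> ('f, 'v) lit \<Rightarrow> bool" where
  "bholds b (PosF p) = fst b p"
| "bholds b (NegF p) = (\<not> fst b p)"
| "bholds b (Zero X) = snd b X"
| "bholds b (Pos X) = (\<not> snd b X)"

definition TD_applicable :: "('f, 'v, 'a) qnp \<Rightarrow> 'a \<Rightarrow> ('f, 'v) bstate \<Rightarrow> bool" where
  "TD_applicable Q a b \<longleftrightarrow> (\<forall>l \<in> Pre Q a. bholds b l)"

definition TD_goal :: "('f, 'v, 'a) qnp \<Rightarrow> ('f, 'v) bstate \<Rightarrow> bool" where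
  "TD_goal Q b \<longleftrightarrow> (\<forall>l \<in> Goal Q. bholds b l)"

text \<open>The unique initial state of T_D(Q) (closed-world assumption on I).\<close>
definition TD_init :: "('f, 'v, 'a) qnp \<Rightarrow> ('f, 'v) bstate \<Rightarrow> bool" where
  "TD_init Q b \<longleftrightarrow> TD_state Q b \<and>
     (\<forall>p \<in> Fs Q. fst b p \<longleftrightarrow> PosF p \<in> Init Q) \<and>
     (\<forall>X \<in> Vs Q. snd b X \<longleftrightarrow> Zero X \<in> Init Q)"

text \<open>Possible successors: propositional effects kept, Inc(X) becomes the effect not p_{X=0},
  Dec(X) the nondeterministic effect not p_{X=0} | p_{X=0}.\<close>
definition TD_succ :: "('f, 'v, 'a) qnp \<Rightarrow> 'a \<Rightarrow> ('f, 'v) bstate \<Rightarrow> ('f, 'v) bstate \<Rightarrow> bool" where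
  "TD_succ Q a b b' \<longleftrightarrow> TD_state Q b' \<and>
     (\<forall>p \<in> Fs Q. fst b' p = (if PosF p \<in> Eff Q a then True
                              else if NegF p \<in> Eff Q a then False else fst b p)) \<and>
     (\<forall>X \<in> Vs Q. (case Num Q a X of
                     Some Inc \<Rightarrow> \<not> snd b' X
                   | Some Dec \<Rightarrow> True
                   | None \<Rightarrow> snd b' X = snd b X))"

definition TD_traj :: "('f, 'v, 'a) qnp \<Rightarrow> ('f, 'v, 'a) policy \<Rightarrow> (nat \<Rightarrow> ('f, 'v) bstate) \<Rightarrow> (nat \<Rightarrow> 'a) \<Rightarrow> enat \<Rightarrow> bool" where
  "TD_traj Q \<pi> bs as n \<longleftrightarrow>
     (\<forall>i. enat i \<le> n \<longrightarrow> TD_state Q (bs i)) \<and>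
     (\<forall>i. enat i < n \<longrightarrow> \<pi> (bs i) = Some (as i) \<and> as i \<in> Ops Q \<and> TD_applicable Q (as i) (bs i) \<and>
                         TD_succ Q (as i) (bs i) (bs (Suc i)) \<and> \<not> TD_goal Q (bs i))"

definition strong_cyclic_TD :: "('f, 'v, 'a) policy \<Rightarrow> ('f, 'v, 'a) qnp \<Rightarrow> bool" where
  "strong_cyclic_TD \<pi> Q \<longleftrightarrow> (\<forall>bs as m.
     TD_traj Q \<pi> bs as (enat m) \<and> TD_init Q (bs 0) \<longrightarrow>
     (\<exists>bs' as' k. TD_traj Q \<pi> bs' as' (enat k) \<and> bs' 0 = bs m \<and> TD_goal Q (bs' k)))"

definition terminating_TD_traj :: "('f, 'v, 'a) qnp \<Rightarrow> ('f, 'v, 'a) policy \<Rightarrow> (nat \<Rightarrow> ('f, 'v) bstate) \<Rightarrow> bool" where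
  "terminating_TD_traj Q \<pi> bs \<longleftrightarrow> (\<exists>X \<in> Vs Q.
     (\<exists>b a. infinite {i. bs i = b} \<and> \<pi> b = Some a \<and> Num Q a X = Some Dec) \<and>
     (\<forall>b a. infinite {i. bs i = b} \<and> \<pi> b = Some a \<longrightarrow> Num Q a X \<noteq> Some Inc))"

definition TD_terminating :: "('f, 'v, 'a) policy \<Rightarrow> ('f, 'v, 'a) qnp \<Rightarrow> bool" where
  "TD_terminating \<pi> Q \<longleftrightarrow> (\<forall>bs as.
     TD_traj Q \<pi> bs as \<infinity> \<and> TD_init Q (bs 0) \<longrightarrow> terminating_TD_traj Q \<pi> bs)"

end

theory Submission
  imports Defs
begin

lemma holds_bar:
  assumes "is_state Q s" shows "holds s l = bholds (bar s) l"
  using assms by (cases l) (auto simp: bar_def is_state_def less_le)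

lemma applicable_bar: "is_state Q s \<Longrightarrow> applicable Q a s = TD_applicable Q a (bar s)"
  by (auto simp: applicable_def TD_applicable_def holds_bar)

lemma goal_bar: "is_state Q s \<Longrightarrow> is_goal Q s = TD_goal Q (bar s)"
  by (auto simp: is_goal_def TD_goal_def holds_bar)

lemma state_bar: "is_state Q s \<Longrightarrow> TD_state Q (bar s)"
  by (auto simp: is_state_def TD_state_def bar_def)

lemma init_bar: "is_init Q s \<Longrightarrow> TD_init Q (bar s)"
  by (auto simp: is_init_def TD_init_def state_bar) (auto simp: bar_def)

lemma bar_init:
  assumes wf: "wf_qnp Q" and st: "is_state Q s" and ti: "TD_init Q (bar s)"
  shows "is_init Q s"
proof -
  have cw1: "\<forall>p \<in> Fs Q. fst s p \<longleftrightarrow> PosF p \<in> Init Q"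
   and cw2: "\<forall>X \<in> Vs Q. snd s X = 0 \<longleftrightarrow> Zero X \<in> Init Q"
    using ti by (auto simp: TD_init_def bar_def)
  have "holds s l" if l: "l \<in> Init Q" for l
  proof (cases l)
    case (PosF p) then show ?thesis using wf l cw1 by (auto simp: wf_qnp_def)
  next
    case (NegF p)
    then have "p \<in> Fs Q" "PosF p \<notin> Init Q" using wf l by (auto simp: wf_qnp_def consistent_def)
    then show ?thesis using NegF cw1 by auto
  next
    case (Zero X) then show ?thesis using wf l cw2 by (auto simp: wf_qnp_def)
  next
    case (Pos X)
    then have "X \<in> Vs Q" "Zero X \<notin> Init Q" using wf l by (auto simp: wf_qnp_def consistent_def)
    then show ?thesis using Pos cw2 st by (auto simp: is_state_def less_le)
  qed
  then show ?thesis using st cw1 cw2 by (auto simp: is_init_def)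
qed

lemma succ_bar:
  assumes "succ Q a s s'" "is_state Q s"
  shows "TD_succ Q a (bar s) (bar s')"
proof -
  have st': "is_state Q s'" using assms by (simp add: succ_def)
  show ?thesis
    unfolding TD_succ_def
  proof (intro conjI ballI)
    show "TD_state Q (bar s')" using st' by (rule state_bar)
  next
    fix p assume "p \<in> Fs Q" then show "fst (bar s') p = (if PosF p \<in> Eff Q a then True
                              else if NegF p \<in> Eff Q a then False else fst (bar s) p)"
      using assms by (auto simp: succ_def bar_def)
  next
    fix X assume X: "X \<in> Vs Q"
    then have c: "(case Num Q a X of Some Inc \<Rightarrow> snd s' X > snd s X
                   | Some Dec \<Rightarrow> snd s' X < snd s X | None \<Rightarrow> snd s' X = snd s X)"
      using assms by (auto simp: succ_def)
    have "snd s X \<ge> 0" using assms by (auto simp: is_state_def)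
    then show "case Num Q a X of Some Inc \<Rightarrow> \<not> snd (bar s') X | Some Dec \<Rightarrow> True
               | None \<Rightarrow> snd (bar s') X = snd (bar s) X"
      using c by (auto simp: bar_def split: option.splits neff.splits)
  qed
qed

lemma Q_to_TD:
  assumes "eps_seq Q \<epsilon> ss as n" "pi_traj Q \<pi> ss as n"
  shows "TD_traj Q \<pi> (\<lambda>i. bar (ss i)) as n"
  using assms unfolding TD_traj_def eps_seq_def pi_traj_def
  by (auto simp: state_bar applicable_bar goal_bar succ_bar dest: order.strict_implies_order)

definition Dset :: "('f,'v,'a) qnp \<Rightarrow> (nat \<Rightarrow> 'a) \<Rightarrow> enat \<Rightarrow> nat \<Rightarrow> 'v \<Rightarrow> nat set" where
  "Dset Q as n i X = {j. i \<le> j \<and> enat j < n \<and> Num Q (as j) X = Some Dec \<and>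
      (\<forall>k. i \<le> k \<and> k \<le> j \<longrightarrow> Num Q (as k) X \<noteq> Some Inc)}"

definition Kc :: "('f,'v,'a) qnp \<Rightarrow> (nat \<Rightarrow> 'a) \<Rightarrow> nat \<Rightarrow> 'v \<Rightarrow> nat" where
  "Kc Q as i X = card {j. j < i \<and> Num Q (as j) X = Some Inc}"

lemma Kc_0: "Kc Q as 0 X = 0" by (simp add: Kc_def)

lemma Kc_Suc: "Kc Q as (Suc i) X = Kc Q as i X + (if Num Q (as i) X = Some Inc then 1 else 0)"
proof -
  have "{j. j < Suc i \<and> Num Q (as j) X = Some Inc} =
        {j. j < i \<and> Num Q (as j) X = Some Inc} \<union> (if Num Q (as i) X = Some Inc then {i} else {})"
    by (auto simp: less_Suc_eq)
  then show ?thesis by (simp add: Kc_def)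
qed

lemma Dset_Inc: "Num Q (as i) X = Some Inc \<Longrightarrow> Dset Q as n i X = {}"
  by (auto simp: Dset_def)

lemma Dset_step:
  assumes "Num Q (as i) X \<noteq> Some Inc" "enat i < n"
  shows "Dset Q as n i X = Dset Q as n (Suc i) X \<union> (if Num Q (as i) X = Some Dec then {i} else {})"
proof (rule set_eqI)
  fix j
  show "j \<in> Dset Q as n i X \<longleftrightarrow> j \<in> Dset Q as n (Suc i) X \<union> (if Num Q (as i) X = Some Dec then {i} else {})"
  proof (cases "j = i")
    case True then show ?thesis using assms by (auto simp: Dset_def)
  next
    case False
    have "(\<forall>k. i \<le> k \<and> k \<le> j \<longrightarrow> Num Q (as k) X \<noteq> Some Inc) \<longleftrightarrow>
          (\<forall>k. Suc i \<le> k \<and> k \<le> j \<longrightarrow> Num Q (as k) X \<noteq> Some Inc)"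
      using assms(1) by (metis Suc_leD le_antisym not_less_eq_eq)
    moreover have "i \<le> j \<longleftrightarrow> Suc i \<le> j" using False by auto
    ultimately show ?thesis using False by (simp add: Dset_def)
  qed
qed

lemma card_Dset_step:
  assumes "Num Q (as i) X \<noteq> Some Inc" "enat i < n" "finite (Dset Q as n (Suc i) X)"
  shows "card (Dset Q as n i X) = card (Dset Q as n (Suc i) X) + (if Num Q (as i) X = Some Dec then 1 else 0)"
proof -
  have "i \<notin> Dset Q as n (Suc i) X" by (auto simp: Dset_def)
  then show ?thesis using Dset_step[of Q as i X n, OF assms(1,2)] assms(3) by auto
qed

lemma num_notV: "wf_qnp Q \<Longrightarrow> a \<in> Ops Q \<Longrightarrow> X \<notin> Vs Q \<Longrightarrow> Num Q a X = None"
  unfolding wf_qnp_def by blast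

lemma pre_Dec: "wf_qnp Q \<Longrightarrow> a \<in> Ops Q \<Longrightarrow> Num Q a X = Some Dec \<Longrightarrow> Pos X \<in> Pre Q a"
  unfolding wf_qnp_def by blast

lemma realize:
  assumes wf: "wf_qnp Q" and tr: "TD_traj Q \<pi> bs as n"
    and fin: "\<And>X i. X \<in> Vs Q \<Longrightarrow> finite (Dset Q as n i X)"
    and s0: "is_state Q s0" "bar s0 = bs 0"
  shows "\<exists>\<epsilon>>0. \<exists>ss. eps_seq Q \<epsilon> ss as n \<and> pi_traj Q \<pi> ss as n \<and>
             (\<forall>i. enat i \<le> n \<longrightarrow> bar (ss i) = bs i) \<and> ss 0 = s0"
proof -
  define D where "D i X = real (card (Dset Q as n i X))" for i X
  define K where "K i X = real (Kc Q as i X)" for i X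
  define c where "c X = (if snd (bs 0) X then 1 else snd s0 X / (1 + D 0 X))" for X
  define v where "v i X = (if X \<in> Vs Q \<and> \<not> snd (bs i) X then c X * (1 + D i X + K i X) else 0)" for i X
  define ss where "ss i = (fst (bs i), v i)" for i
  have sv: "snd (ss j) = v j" for j by (simp add: ss_def)
  define \<epsilon> where "\<epsilon> = Min (insert 1 (c ` Vs Q))"
  have s0nn: "snd s0 X \<ge> 0" for X using s0 by (auto simp: is_state_def)
  have sb: "snd (bs 0) = (\<lambda>X. snd s0 X = 0)" using s0(2) by (metis bar_def snd_conv)
  have fb: "fst (bs 0) = fst s0" using s0(2) by (metis bar_def fst_conv)
  have D0: "D i X \<ge> 0" for i X by (simp add: D_def)
  have K0: "K i X \<ge> 0" for i X by (simp add: K_def)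
  have cpos: "c X > 0" for X
  proof (cases "snd (bs 0) X")
    case False
    then have "snd s0 X \<noteq> 0" using sb by metis
    then have "snd s0 X > 0" using s0nn[of X] by auto
    then show ?thesis using False D0[of 0 X] by (simp add: c_def)
  qed (simp add: c_def)
  have finV: "finite (Vs Q)" using wf by (simp add: wf_qnp_def)
  have epos: "\<epsilon> > 0" unfolding \<epsilon>_def using finV cpos by (subst Min_gr_iff) auto
  have ec: "\<epsilon> \<le> c X" if "X \<in> Vs Q" for X unfolding \<epsilon>_def using finV that by (intro Min_le) auto
  have vnn: "v i X \<ge> 0" for i X using cpos[of X] D0[of i X] K0[of i X] by (simp add: v_def)
  have vge: "v i X \<ge> c X" if "X \<in> Vs Q" "\<not> snd (bs i) X" for i X
    using that cpos[of X] D0[of i X] K0[of i X] by (simp add: v_def)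
  have v0: "v i X = 0 \<longleftrightarrow> \<not> (X \<in> Vs Q \<and> \<not> snd (bs i) X)" for i X
    using vge[of X i] cpos[of X] by (auto simp: v_def)
  have TDs: "TD_state Q (bs i)" if "enat i \<le> n" for i using tr that by (simp add: TD_traj_def)
  have st: "is_state Q (ss i)" if "enat i \<le> n" for i
    using TDs[OF that] vnn by (auto simp: is_state_def ss_def TD_state_def v_def)
  have barss: "bar (ss i) = bs i" if "enat i \<le> n" for i
  proof -
    have "snd (bar (ss i)) X = snd (bs i) X" for X
      using TDs[OF that] v0[of i X] by (auto simp: bar_def ss_def TD_state_def)
    then show ?thesis by (auto simp: bar_def ss_def intro: prod_eqI)
  qed
  have ss0: "ss 0 = s0"
  proof -
    have "v 0 X = snd s0 X" for X
    proof (cases "X \<in> Vs Q \<and> \<not> snd (bs 0) X")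
      case True
      then show ?thesis using D0[of 0 X] by (simp add: v_def c_def K_def Kc_0)
    next
      case False
      then show ?thesis using s0(1) sb by (auto simp: v_def is_state_def)
    qed
    then have "v 0 = snd s0" by auto
    then show ?thesis using fb by (simp add: ss_def prod_eq_iff)
  qed
  have step: "succ Q (as i) (ss i) (ss (Suc i)) \<and> eps_step \<epsilon> (ss i) (ss (Suc i))"
    if i: "enat i < n" for i
  proof -
    have i': "enat (Suc i) \<le> n" using i by (simp add: Suc_ile_eq)
    have tdi: "\<pi> (bs i) = Some (as i)" "as i \<in> Ops Q" "TD_applicable Q (as i) (bs i)"
        "TD_succ Q (as i) (bs i) (bs (Suc i))"
      using tr i by (auto simp: TD_traj_def)
    have var: "(case Num Q (as i) X of Some Inc \<Rightarrow> v (Suc i) X > v i X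
                   | Some Dec \<Rightarrow> v (Suc i) X < v i X | None \<Rightarrow> v (Suc i) X = v i X)
          \<and> (v (Suc i) X \<noteq> v i X \<longrightarrow> (\<bar>v (Suc i) X - v i X\<bar> \<ge> \<epsilon> \<or>
                (0 = v (Suc i) X \<and> v (Suc i) X < v i X \<and> v i X < \<epsilon>)))" for X
    proof (cases "X \<in> Vs Q")
      case False
      then have "Num Q (as i) X = None" using num_notV[OF wf tdi(2)] by blast
      then show ?thesis using False by (simp add: v_def)
    next
      case X: True
      have tsX: "case Num Q (as i) X of Some Inc \<Rightarrow> \<not> snd (bs (Suc i)) X | Some Dec \<Rightarrow> True
               | None \<Rightarrow> snd (bs (Suc i)) X = snd (bs i) X" using tdi(4) X by (simp add: TD_succ_def)
      show ?thesis
      proof (cases "Num Q (as i) X")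
        case None
        then have "D (Suc i) X = D i X" "K (Suc i) X = K i X"
          using card_Dset_step[OF _ i fin[OF X]] by (auto simp: D_def K_def Kc_Suc)
        then show ?thesis using None tsX by (simp add: v_def)
      next
        case (Some e)
        show ?thesis
        proof (cases e)
          case Inc
          have "K (Suc i) X = K i X + 1" "D i X = 0" using Some Inc
            by (auto simp: D_def K_def Kc_Suc Dset_Inc)
          moreover have "\<not> snd (bs (Suc i)) X" using tsX Some Inc by simp
          ultimately have e1: "v (Suc i) X = c X * (1 + K i X) + c X + c X * D (Suc i) X"
            using X by (simp add: v_def algebra_simps)
          have e2: "v i X \<le> c X * (1 + K i X)"
            using X cpos[of X] K0[of i X] \<open>D i X = 0\<close> by (auto simp: v_def)
          have "c X * D (Suc i) X \<ge> 0" using cpos[of X] D0[of "Suc i" X] by simp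
          then have "v (Suc i) X \<ge> v i X + c X" using e1 e2 by linarith
          then show ?thesis using Some Inc ec[OF X] cpos[of X] by auto
        next
          case Dec
          have "D i X = D (Suc i) X + 1" "K (Suc i) X = K i X"
            using card_Dset_step[OF _ i fin[OF X]] Some Dec by (auto simp: D_def K_def Kc_Suc)
          moreover have "Pos X \<in> Pre Q (as i)" using pre_Dec[OF wf tdi(2)] Some Dec by blast
          then have "\<not> snd (bs i) X" using tdi(3) by (auto simp: TD_applicable_def)
          ultimately show ?thesis
            using Some Dec X cpos[of X] ec[OF X] vge[OF X, of i] D0[of "Suc i" X]
            by (cases "snd (bs (Suc i)) X") (auto simp: v_def algebra_simps)
        qed
      qed
    qed
    have "fst (ss (Suc i)) p = (if PosF p \<in> Eff Q (as i) then True
                              else if NegF p \<in> Eff Q (as i) then False else fst (ss i) p)" if "p \<in> Fs Q" for p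
      using tdi(4) that by (auto simp: TD_succ_def ss_def)
    note fp = this
    show ?thesis unfolding succ_def eps_step_def
    proof (intro conjI ballI allI impI)
      show "is_state Q (ss (Suc i))" using st[OF i'] .
    next
      fix p assume "p \<in> Fs Q" then show "fst (ss (Suc i)) p = (if PosF p \<in> Eff Q (as i) then True
                              else if NegF p \<in> Eff Q (as i) then False else fst (ss i) p)" by (rule fp)
    next
      fix X show "case Num Q (as i) X of None \<Rightarrow> snd (ss (Suc i)) X = snd (ss i) X
               | Some Inc \<Rightarrow> snd (ss i) X < snd (ss (Suc i)) X
               | Some Dec \<Rightarrow> snd (ss (Suc i)) X < snd (ss i) X"
        unfolding sv using conjunct1[OF var[of X]] .
    next
      fix X assume "snd (ss (Suc i)) X \<noteq> snd (ss i) X"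
      then show "\<epsilon> \<le> \<bar>snd (ss (Suc i)) X - snd (ss i) X\<bar> \<or>
        (0 = snd (ss (Suc i)) X \<and> snd (ss (Suc i)) X < snd (ss i) X \<and> snd (ss i) X < \<epsilon>)"
        using conjunct2[OF var[of X]] unfolding sv by blast
    qed
  qed
  have "eps_seq Q \<epsilon> ss as n"
    unfolding eps_seq_def
  proof (intro conjI allI impI)
    fix i assume i: "enat i < n"
    then have tdi: "\<pi> (bs i) = Some (as i)" "as i \<in> Ops Q" "TD_applicable Q (as i) (bs i)"
      using tr by (auto simp: TD_traj_def)
    show "as i \<in> Ops Q" by (fact tdi(2))
    show "applicable Q (as i) (ss i)"
      using tdi(3) applicable_bar[OF st] barss i by (simp add: order.strict_implies_order)
    show "succ Q (as i) (ss i) (ss (Suc i))" "eps_step \<epsilon> (ss i) (ss (Suc i))" using step[OF i] by auto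
  qed (fact st)
  moreover have "pi_traj Q \<pi> ss as n"
    unfolding pi_traj_def
  proof (intro allI impI)
    fix i assume i: "enat i < n"
    then have i': "enat i \<le> n" by (simp add: order.strict_implies_order)
    have "\<pi> (bs i) = Some (as i)" "\<not> TD_goal Q (bs i)" using tr i by (auto simp: TD_traj_def)
    then show "\<pi> (bar (ss i)) = Some (as i) \<and> \<not> is_goal Q (ss i)"
      using barss[OF i'] goal_bar[OF st[OF i']] by simp
  qed
  ultimately show ?thesis using epos barss ss0 by blast
qed

lemma finite_TD_states:
  assumes wf: "wf_qnp Q" shows "finite {b. TD_state Q b}"
proof -
  have "{b. TD_state Q b} \<subseteq> (\<lambda>(A,B). ((\<lambda>p. p \<in> A), (\<lambda>X. X \<notin> B))) ` (Pow (Fs Q) \<times> Pow (Vs Q))"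
  proof
    fix b assume "b \<in> {b. TD_state Q b}"
    then have b: "TD_state Q b" by simp
    have "b = (\<lambda>(A,B). ((\<lambda>p. p \<in> A), (\<lambda>X. X \<notin> B))) ({p. fst b p}, {X. \<not> snd b X})"
      by (simp add: prod_eq_iff)
    moreover have "({p. fst b p}, {X. \<not> snd b X}) \<in> Pow (Fs Q) \<times> Pow (Vs Q)"
      using b by (auto simp: TD_state_def)
    ultimately show "b \<in> (\<lambda>(A,B). ((\<lambda>p. p \<in> A), (\<lambda>X. X \<notin> B))) ` (Pow (Fs Q) \<times> Pow (Vs Q))"
      by blast
  qed
  moreover have "finite (Pow (Fs Q) \<times> Pow (Vs Q))" using wf by (simp add: wf_qnp_def)
  ultimately show ?thesis by (metis finite_imageI finite_subset)
qed

lemma finite_nonrec: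
  assumes "finite (range bs)"
  shows "finite {i. finite {j. bs j = bs i}}"
proof -
  have "{i. finite {j. bs j = bs i}} = (\<Union>b \<in> {b \<in> range bs. finite {j. bs j = b}}. {j. bs j = b})"
    by auto
  then show ?thesis using assms by simp
qed

lemma TD_range:
  assumes "wf_qnp Q" "TD_traj Q \<pi> bs as \<infinity>" shows "finite (range bs)"
proof -
  have "range bs \<subseteq> {b. TD_state Q b}" using assms(2) by (auto simp: TD_traj_def)
  then show ?thesis using finite_TD_states[OF assms(1)] finite_subset by blast
qed

lemma fin_dec:
  assumes wf: "wf_qnp Q" and tr: "TD_traj Q \<pi> bs as \<infinity>" and nt: "\<not> terminating_TD_traj Q \<pi> bs"
    and X: "X \<in> Vs Q"
  shows "finite (Dset Q as \<infinity> i X)"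
proof -
  have pi: "\<pi> (bs j) = Some (as j)" for j using tr by (simp add: TD_traj_def)
  have "\<not> (\<exists>b a. infinite {i. bs i = b} \<and> \<pi> b = Some a \<and> Num Q a X = Some Dec) \<or>
        (\<exists>b a. infinite {i. bs i = b} \<and> \<pi> b = Some a \<and> Num Q a X = Some Inc)"
    using nt X unfolding terminating_TD_traj_def by blast
  then show ?thesis
  proof
    assume nd: "\<not> (\<exists>b a. infinite {i. bs i = b} \<and> \<pi> b = Some a \<and> Num Q a X = Some Dec)"
    have "Dset Q as \<infinity> i X \<subseteq> {i. finite {j. bs j = bs i}}"
    proof
      fix j assume "j \<in> Dset Q as \<infinity> i X"
      then have "Num Q (as j) X = Some Dec" by (simp add: Dset_def)
      then show "j \<in> {i. finite {j. bs j = bs i}}" using nd pi[of j] by blast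
    qed
    then show ?thesis using finite_nonrec[OF TD_range[OF wf tr]] finite_subset by blast
  next
    assume "\<exists>b a. infinite {i. bs i = b} \<and> \<pi> b = Some a \<and> Num Q a X = Some Inc"
    then obtain b a where inf: "infinite {i. bs i = b}" and pb: "\<pi> b = Some a"
      and inc: "Num Q a X = Some Inc" by blast
    obtain j' where j': "j' \<ge> i" "bs j' = b" using inf unfolding infinite_nat_iff_unbounded_le by blast
    have "as j' = a" using pi[of j'] pb j'(2) by simp
    then have "Dset Q as \<infinity> i X \<subseteq> {..<j'}" using inc j'(1)
      by (auto simp: Dset_def not_less)
    then show ?thesis using finite_subset by blast
  qed
qed

lemma TD_term_Q_term:
  assumes wf: "wf_qnp Q" and tt: "TD_terminating \<pi> Q"
  shows "Q_terminating \<pi> Q"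
  unfolding Q_terminating_def
proof (intro allI impI notI)
  fix ss as n
  assume h: "trajectory Q ss as n \<and> is_init Q (ss 0) \<and> pi_traj Q \<pi> ss as n" and ninf: "n = \<infinity>"
  then obtain \<epsilon> where ep: "\<epsilon> > 0" and es: "eps_seq Q \<epsilon> ss as \<infinity>" by (auto simp: trajectory_def)
  have pt: "pi_traj Q \<pi> ss as \<infinity>" using h ninf by simp
  define bs where "bs i = bar (ss i)" for i
  have tr: "TD_traj Q \<pi> bs as \<infinity>" unfolding bs_def by (rule Q_to_TD[OF es pt])
  have "TD_init Q (bs 0)" using h init_bar unfolding bs_def by blast
  then have "terminating_TD_traj Q \<pi> bs" using tt tr unfolding TD_terminating_def by blast
  then obtain X b1 a1 where X: "X \<in> Vs Q" and inf1: "infinite {i. bs i = b1}" and pb1: "\<pi> b1 = Some a1"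
    and dec1: "Num Q a1 X = Some Dec"
    and noinc: "\<And>b a. infinite {i. bs i = b} \<Longrightarrow> \<pi> b = Some a \<Longrightarrow> Num Q a X \<noteq> Some Inc"
    unfolding terminating_TD_traj_def by blast
  have pi: "\<pi> (bs j) = Some (as j)" for j using pt by (simp add: pi_traj_def bs_def)
  obtain N where N: "{i. finite {j. bs j = bs i}} \<subseteq> {..<N}"
    using finite_nat_bounded[OF finite_nonrec[OF TD_range[OF wf tr]]] by blast
  have noincN: "Num Q (as i) X \<noteq> Some Inc" if "N \<le> i" for i
  proof -
    have "infinite {j. bs j = bs i}" using N that by auto
    then show ?thesis using noinc pi[of i] by blast
  qed
  define x where "x i = snd (ss i) X" for i
  have xs: "x i = snd (ss i) X" for i by (simp add: x_def)
  have ops: "as i \<in> Ops Q" "applicable Q (as i) (ss i)" "succ Q (as i) (ss i) (ss (Suc i))"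
    "eps_step \<epsilon> (ss i) (ss (Suc i))" "is_state Q (ss i)" for i
    using es by (auto simp: eps_seq_def)
  have xnn: "x i \<ge> 0" for i using ops(5)[of i] unfolding xs is_state_def by blast
  have sc: "case Num Q (as i) X of Some Inc \<Rightarrow> x (Suc i) > x i
                   | Some Dec \<Rightarrow> x (Suc i) < x i | None \<Rightarrow> x (Suc i) = x i" for i
    using ops(3)[of i] X unfolding xs succ_def by blast
  have mono1: "x (Suc i) \<le> x i" if "N \<le> i" for i
    using sc[of i] noincN[OF that] by (cases "Num Q (as i) X") (auto split: neff.splits)
  have mono2: "x j \<le> x i" if "N \<le> i" "i \<le> j" for i j
    using that(2)
  proof (induction j rule: dec_induct)
    case (step j) then show ?case using mono1[of j] that(1) by simp
  qed simp
  define S where "S = {i. bs i = b1}"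
  have Sdec: "Num Q (as i) X = Some Dec" if "i \<in> S" for i
    using pi[of i] pb1 dec1 that by (simp add: S_def)
  have Spos: "x i > 0" if "i \<in> S" for i
  proof -
    have "Pos X \<in> Pre Q (as i)" using pre_Dec[OF wf ops(1) Sdec[OF that]] .
    then show ?thesis using ops(2)[of i] unfolding xs applicable_def by fastforce
  qed
  have Sstep: "x (Suc i) = 0 \<or> x (Suc i) \<le> x i - \<epsilon>" if "i \<in> S" for i
  proof -
    have lt: "x (Suc i) < x i" using sc[of i] Sdec[OF that] by simp
    have e: "x (Suc i) \<noteq> x i \<longrightarrow> (\<epsilon> \<le> \<bar>x (Suc i) - x i\<bar> \<or> (0 = x (Suc i) \<and> x (Suc i) < x i \<and> x i < \<epsilon>))"
      using ops(4)[of i] unfolding eps_step_def xs by blast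
    then show ?thesis using lt by (auto simp: abs_if)
  qed
  have unb: "\<exists>j\<ge>m. j \<in> S" for m using inf1 unfolding S_def infinite_nat_iff_unbounded_le by blast
  have P: "\<exists>j\<ge>N. j \<in> S \<and> x j \<le> x N - \<epsilon> * real t" for t
  proof (induction t)
    case 0 then show ?case using unb[of N] mono2 by fastforce
  next
    case (Suc t)
    then obtain j where j: "j \<ge> N" "j \<in> S" "x j \<le> x N - \<epsilon> * real t" by blast
    obtain j' where j': "j' \<ge> Suc j" "j' \<in> S" using unb by blast
    have "x j' \<le> x (Suc j)" using mono2[of "Suc j" j'] j j' by simp
    moreover have "x j' > 0" using Spos[OF j'(2)] .
    ultimately have "x (Suc j) \<le> x j - \<epsilon>" using Sstep[OF j(2)] by auto
    then have "x j' \<le> x N - \<epsilon> * real (Suc t)" using \<open>x j' \<le> x (Suc j)\<close> j(3)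
      by (simp add: algebra_simps)
    then show ?case using j j' by (intro exI[of _ j']) auto
  qed
  obtain t where "x N < real t * \<epsilon>" using reals_Archimedean3[OF ep] by blast
  then obtain j where "j \<in> S" "x j \<le> x N - \<epsilon> * real t" using P[of t] by blast
  then show False using Spos[of j] \<open>x N < real t * \<epsilon>\<close> by (simp add: algebra_simps)
qed

lemma solves_sc:
  assumes wf: "wf_qnp Q" and pol: "is_policy Q \<pi>" and sol: "solves \<pi> Q"
  shows "strong_cyclic_Q \<pi> Q"
  unfolding strong_cyclic_Q_def
proof (intro allI impI)
  fix ss as m
  assume h: "trajectory Q ss as (enat m) \<and> is_init Q (ss 0) \<and> pi_traj Q \<pi> ss as (enat m)"
  then obtain \<epsilon> where ep: "\<epsilon> > 0" and es: "eps_seq Q \<epsilon> ss as (enat m)" by (auto simp: trajectory_def)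
  have pt: "pi_traj Q \<pi> ss as (enat m)" and ini: "is_init Q (ss 0)" using h by auto
  define nxt where "nxt a s = ((\<lambda>p. if p \<in> Fs Q then (if PosF p \<in> Eff Q a then True
        else if NegF p \<in> Eff Q a then False else fst s p) else False),
      (\<lambda>X. if X \<in> Vs Q then (case Num Q a X of Some Inc \<Rightarrow> snd s X + \<epsilon>
           | Some Dec \<Rightarrow> max 0 (snd s X - \<epsilon>) | None \<Rightarrow> snd s X) else 0))" for a s
  define act where "act s = the (\<pi> (bar s))" for s
  define stop where "stop s \<longleftrightarrow> is_goal Q s \<or> \<pi> (bar s) = None \<or> \<not> applicable Q (act s) s" for s
  define ext where "ext k = ((\<lambda>s. nxt (act s) s) ^^ k) (ss m)" for k
  have ext0: "ext 0 = ss m" by (simp add: ext_def)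
  have extS: "ext (Suc k) = nxt (act (ext k)) (ext k)" for k by (simp add: ext_def)
  have nxt_state: "is_state Q (nxt a s)" if "is_state Q s" for a s
    using that ep by (auto simp: is_state_def nxt_def split: option.splits neff.splits)
  have nxt_ok: "succ Q a s (nxt a s) \<and> eps_step \<epsilon> s (nxt a s)"
    if st: "is_state Q s" and a: "a \<in> Ops Q" and ap: "applicable Q a s" for a s
  proof -
    have nn: "snd s X \<ge> 0" for X using st by (simp add: is_state_def)
    have dpos: "snd s X > 0" if "Num Q a X = Some Dec" for X
    proof -
      have "Pos X \<in> Pre Q a" using pre_Dec[OF wf a that] .
      then show ?thesis using ap by (auto simp: applicable_def)
    qed
    have sc: "case Num Q a X of Some Inc \<Rightarrow> snd (nxt a s) X > snd s X
              | Some Dec \<Rightarrow> snd (nxt a s) X < snd s X | None \<Rightarrow> snd (nxt a s) X = snd s X"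
      if X: "X \<in> Vs Q" for X
    proof (cases "Num Q a X")
      case (Some e) then show ?thesis using X ep dpos[of X] by (cases e) (auto simp: nxt_def)
    qed (simp add: nxt_def X)
    have esX: "snd (nxt a s) X \<noteq> snd s X \<longrightarrow> (\<bar>snd (nxt a s) X - snd s X\<bar> \<ge> \<epsilon> \<or>
       (0 = snd (nxt a s) X \<and> snd (nxt a s) X < snd s X \<and> snd s X < \<epsilon>))" for X
    proof (cases "X \<in> Vs Q")
      case False then show ?thesis using st by (simp add: nxt_def is_state_def)
    next
      case X: True
      show ?thesis
      proof (cases "Num Q a X")
        case None then show ?thesis using X by (simp add: nxt_def)
      next
        case (Some e)
        show ?thesis
        proof (cases e)
          case Inc then show ?thesis using X Some ep by (simp add: nxt_def)
        next
          case Dec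
          have "snd s X > 0" using dpos Some Dec by simp
          then show ?thesis using X Some Dec ep by (auto simp: nxt_def max_def abs_if)
        qed
      qed
    qed
    show ?thesis unfolding succ_def eps_step_def
      using nxt_state[OF st, of a] sc esX by (auto simp: nxt_def)
  qed
  have extst: "is_state Q (ext k)" for k
  proof (induction k)
    case 0 then show ?case using es by (simp add: ext0 eps_seq_def)
  next
    case (Suc k) then show ?case by (simp add: extS nxt_state)
  qed
  have nonstop: "\<pi> (bar (ext k)) = Some (act (ext k)) \<and> act (ext k) \<in> Ops Q \<and>
       applicable Q (act (ext k)) (ext k) \<and> \<not> is_goal Q (ext k) \<and>
       succ Q (act (ext k)) (ext k) (ext (Suc k)) \<and> eps_step \<epsilon> (ext k) (ext (Suc k))"
    if ns: "\<not> stop (ext k)" for k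
  proof -
    obtain a where a: "\<pi> (bar (ext k)) = Some a" using ns by (auto simp: stop_def)
    then have aa: "act (ext k) = a" by (simp add: act_def)
    have ao: "a \<in> Ops Q" using pol a unfolding is_policy_def by blast
    have ap: "applicable Q a (ext k)" using ns aa by (simp add: stop_def)
    show ?thesis using a aa ao ap ns nxt_ok[OF extst ao ap] by (simp add: stop_def extS)
  qed
  define S where "S i = (if i \<le> m then ss i else ext (i - m))" for i
  define A where "A i = (if i < m then as i else act (ext (i - m)))" for i
  have Sge: "S i = ext (i - m)" if "m \<le> i" for i
    using that ext0 by (auto simp: S_def)
  have key: "eps_seq Q \<epsilon> S A n \<and> pi_traj Q \<pi> S A n"
    if mn: "enat m \<le> n" and nst: "\<forall>k. enat (m + k) < n \<longrightarrow> \<not> stop (ext k)" for n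
  proof -
    have A1: "S i = ss i \<and> S (Suc i) = ss (Suc i) \<and> A i = as i" if "i < m" for i
      using that by (simp add: S_def A_def)
    have A2: "S i = ext (i - m) \<and> S (Suc i) = ext (Suc (i - m)) \<and> A i = act (ext (i - m))"
      if "m \<le> i" for i
      using that Sge[of i] Sge[of "Suc i"] by (simp add: A_def Suc_diff_le)
    have stS: "is_state Q (S i)" for i
      using es extst by (auto simp: S_def eps_seq_def)
    have stepS: "A i \<in> Ops Q \<and> applicable Q (A i) (S i) \<and> succ Q (A i) (S i) (S (Suc i)) \<and>
        eps_step \<epsilon> (S i) (S (Suc i)) \<and> \<pi> (bar (S i)) = Some (A i) \<and> \<not> is_goal Q (S i)"
      if i: "enat i < n" for i
    proof (cases "i < m")
      case True
      then show ?thesis using A1[OF True] es pt by (simp add: eps_seq_def pi_traj_def)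
    next
      case False
      then have "m \<le> i" by simp
      have a2: "S i = ext (i - m)" "S (Suc i) = ext (Suc (i - m))" "A i = act (ext (i - m))"
        using A2[OF \<open>m \<le> i\<close>] by auto
      have "\<not> stop (ext (i - m))" using nst i \<open>m \<le> i\<close> by simp
      note ns = nonstop[OF this]
      show ?thesis unfolding a2 using ns by blast
    qed
    show ?thesis using stS stepS by (simp add: eps_seq_def pi_traj_def)
  qed
  have S0: "S 0 = ss 0" by (simp add: S_def)
  show "\<exists>ss' as' k. trajectory Q ss' as' (enat k) \<and> pi_traj Q \<pi> ss' as' (enat k) \<and>
                  ss' 0 = ss m \<and> is_goal Q (ss' k)"
  proof (cases "\<exists>k. stop (ext k)")
    case False
    then have k: "eps_seq Q \<epsilon> S A \<infinity> \<and> pi_traj Q \<pi> S A \<infinity>" using key[of \<infinity>] by simp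
    moreover have "maximal Q \<pi> S \<infinity>" by (simp add: maximal_def)
    ultimately have "reaches_goal Q S \<infinity>" using sol ep ini S0 unfolding solves_def by metis
    then show ?thesis using k by (auto simp: reaches_goal_def pi_traj_def)
  next
    case True
    define k0 where "k0 = (LEAST k. stop (ext k))"
    have sk0: "stop (ext k0)" using True LeastI_ex unfolding k0_def by metis
    have nsk: "\<not> stop (ext k)" if "k < k0" for k using not_less_Least that unfolding k0_def by metis
    have k: "eps_seq Q \<epsilon> S A (enat (m + k0)) \<and> pi_traj Q \<pi> S A (enat (m + k0))"
      using key[of "enat (m + k0)"] nsk by simp
    have Sm: "S (m + k0) = ext k0" using Sge[of "m + k0"] by simp
    have "maximal Q \<pi> S (enat (m + k0))"
      using sk0 Sm unfolding maximal_def stop_def act_def by (cases "\<pi> (bar (ext k0))") auto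
    then have "reaches_goal Q S (enat (m + k0))" using sol ep ini S0 k unfolding solves_def by metis
    then obtain i where i: "i \<le> m + k0" "is_goal Q (S i)" by (auto simp: reaches_goal_def)
    have "i = m + k0"
    proof (rule ccontr)
      assume "i \<noteq> m + k0"
      then have "enat i < enat (m + k0)" using i(1) by simp
      then show False using k i(2) unfolding pi_traj_def by blast
    qed
    then have g: "is_goal Q (ext k0)" using i Sm by simp
    have "eps_seq Q \<epsilon> ext (\<lambda>k. act (ext k)) (enat k0) \<and> pi_traj Q \<pi> ext (\<lambda>k. act (ext k)) (enat k0)"
      using extst nonstop nsk by (simp add: eps_seq_def pi_traj_def)
    then show ?thesis using ep ext0 g unfolding trajectory_def by blast
  qed
qed

lemma solves_term:
  assumes sol: "solves \<pi> Q" shows "Q_terminating \<pi> Q"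
  unfolding Q_terminating_def
proof (intro allI impI notI)
  fix ss as n
  assume h: "trajectory Q ss as n \<and> is_init Q (ss 0) \<and> pi_traj Q \<pi> ss as n" and ninf: "n = \<infinity>"
  then obtain \<epsilon> where ep: "\<epsilon> > 0" and es: "eps_seq Q \<epsilon> ss as n" by (auto simp: trajectory_def)
  have "maximal Q \<pi> ss n" using ninf by (simp add: maximal_def)
  then have "reaches_goal Q ss n" using sol ep es h unfolding solves_def by blast
  then show False using h ninf by (auto simp: reaches_goal_def pi_traj_def)
qed

lemma sc_term_solves:
  assumes sc: "strong_cyclic_Q \<pi> Q" and qt: "Q_terminating \<pi> Q"
  shows "solves \<pi> Q"
  unfolding solves_def
proof (intro allI impI)
  fix \<epsilon> :: real and ss as n
  assume ep: "\<epsilon> > 0" and h: "eps_seq Q \<epsilon> ss as n \<and> is_init Q (ss 0) \<and> pi_traj Q \<pi> ss as n \<and> maximal Q \<pi> ss n"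
  then have tr: "trajectory Q ss as n" by (auto simp: trajectory_def)
  then have "n \<noteq> \<infinity>" using qt h unfolding Q_terminating_def by blast
  then obtain m where m: "n = enat m" by auto
  show "reaches_goal Q ss n"
  proof (rule ccontr)
    assume ng: "\<not> reaches_goal Q ss n"
    then have ngm: "\<not> is_goal Q (ss m)" using m by (auto simp: reaches_goal_def)
    have stuck: "\<pi> (bar (ss m)) = None \<or> (\<exists>a. \<pi> (bar (ss m)) = Some a \<and> \<not> applicable Q a (ss m))"
      using h m ngm by (auto simp: maximal_def)
    obtain ss' as' k where t': "trajectory Q ss' as' (enat k)" "pi_traj Q \<pi> ss' as' (enat k)"
      "ss' 0 = ss m" "is_goal Q (ss' k)"
      using sc tr h m unfolding strong_cyclic_Q_def by blast
    have "k \<noteq> 0"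
    proof
      assume "k = 0" then show False using t'(3,4) ngm by simp
    qed
    then have "enat 0 < enat k" by simp
    then have "\<pi> (bar (ss' 0)) = Some (as' 0)" "applicable Q (as' 0) (ss' 0)"
      using t'(1,2) unfolding pi_traj_def trajectory_def eps_seq_def by blast+
    then show False using stuck t'(3) by auto
  qed
qed

definition canon :: "('f, 'v) bstate \<Rightarrow> ('f, 'v) state" where
  "canon b = (fst b, \<lambda>X. if snd b X then 0 else 1)"

lemma canon_ok: "TD_state Q b \<Longrightarrow> is_state Q (canon b) \<and> bar (canon b) = b"
  by (auto simp: canon_def TD_state_def is_state_def bar_def prod_eq_iff)

lemma fin_Dset_finite: "finite (Dset Q as (enat m) i X)"
proof -
  have "Dset Q as (enat m) i X \<subseteq> {..<m}" by (auto simp: Dset_def)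
  then show ?thesis using finite_subset by blast
qed

lemma scQ_scTD:
  assumes wf: "wf_qnp Q" and sc: "strong_cyclic_Q \<pi> Q"
  shows "strong_cyclic_TD \<pi> Q"
  unfolding strong_cyclic_TD_def
proof (intro allI impI)
  fix bs as m
  assume h: "TD_traj Q \<pi> bs as (enat m) \<and> TD_init Q (bs 0)"
  have "TD_state Q (bs 0)" using h by (simp add: TD_traj_def)
  note c = canon_ok[OF this]
  obtain \<epsilon> ss where ep: "\<epsilon> > 0" and r: "eps_seq Q \<epsilon> ss as (enat m)" "pi_traj Q \<pi> ss as (enat m)"
    "\<forall>i. enat i \<le> enat m \<longrightarrow> bar (ss i) = bs i" "ss 0 = canon (bs 0)"
    using realize[OF wf conjunct1[OF h] fin_Dset_finite c[THEN conjunct1] c[THEN conjunct2]]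
    by blast
  have "is_init Q (ss 0)" using bar_init[OF wf, of "ss 0"] c r(4) h by simp
  moreover have "trajectory Q ss as (enat m)" using ep r(1) by (auto simp: trajectory_def)
  ultimately obtain ss' as' k where t': "trajectory Q ss' as' (enat k)" "pi_traj Q \<pi> ss' as' (enat k)"
      "ss' 0 = ss m" "is_goal Q (ss' k)"
    using sc r(2) unfolding strong_cyclic_Q_def by blast
  obtain \<epsilon>' where es': "eps_seq Q \<epsilon>' ss' as' (enat k)" using t'(1) by (auto simp: trajectory_def)
  have "TD_traj Q \<pi> (\<lambda>i. bar (ss' i)) as' (enat k)" using Q_to_TD[OF es' t'(2)] .
  moreover have "bar (ss' 0) = bs m" using t'(3) r(3) by simp
  moreover have "TD_goal Q (bar (ss' k))"
    using t'(4) goal_bar[of Q "ss' k"] es' by (simp add: eps_seq_def)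
  ultimately show "\<exists>bs' as' k. TD_traj Q \<pi> bs' as' (enat k) \<and> bs' 0 = bs m \<and> TD_goal Q (bs' k)"
    by blast
qed

lemma Qterm_TDterm:
  assumes wf: "wf_qnp Q" and qt: "Q_terminating \<pi> Q"
  shows "TD_terminating \<pi> Q"
  unfolding TD_terminating_def
proof (intro allI impI)
  fix bs as
  assume h: "TD_traj Q \<pi> bs as \<infinity> \<and> TD_init Q (bs 0)"
  show "terminating_TD_traj Q \<pi> bs"
  proof (rule ccontr)
    assume nt: "\<not> terminating_TD_traj Q \<pi> bs"
    have "TD_state Q (bs 0)" using h by (simp add: TD_traj_def)
    note c = canon_ok[OF this]
    obtain \<epsilon> ss where ep: "\<epsilon> > 0" and r: "eps_seq Q \<epsilon> ss as \<infinity>" "pi_traj Q \<pi> ss as \<infinity>"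
      "\<forall>i. enat i \<le> \<infinity> \<longrightarrow> bar (ss i) = bs i" "ss 0 = canon (bs 0)"
      using realize[OF wf conjunct1[OF h] fin_dec[OF wf conjunct1[OF h] nt]
          c[THEN conjunct1] c[THEN conjunct2]]
      by blast
    have "is_init Q (ss 0)" using bar_init[OF wf, of "ss 0"] c r(4) h by simp
    moreover have "trajectory Q ss as \<infinity>" using ep r(1) by (auto simp: trajectory_def)
    ultimately show False using qt r(2) unfolding Q_terminating_def by blast
  qed
qed

lemma scTD_scQ:
  assumes wf: "wf_qnp Q" and sc: "strong_cyclic_TD \<pi> Q"
  shows "strong_cyclic_Q \<pi> Q"
  unfolding strong_cyclic_Q_def
proof (intro allI impI)
  fix ss as m
  assume h: "trajectory Q ss as (enat m) \<and> is_init Q (ss 0) \<and> pi_traj Q \<pi> ss as (enat m)"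
  then obtain \<epsilon> where es: "eps_seq Q \<epsilon> ss as (enat m)" by (auto simp: trajectory_def)
  have tr: "TD_traj Q \<pi> (\<lambda>i. bar (ss i)) as (enat m)" using Q_to_TD[OF es] h by blast
  have "TD_init Q (bar (ss 0))" using h init_bar by blast
  then obtain bs' as' k where t': "TD_traj Q \<pi> bs' as' (enat k)" "bs' 0 = bar (ss m)" "TD_goal Q (bs' k)"
    using sc tr unfolding strong_cyclic_TD_def by fastforce
  have stm: "is_state Q (ss m)" using es by (simp add: eps_seq_def)
  obtain \<epsilon>' ss' where ep: "\<epsilon>' > 0" and r: "eps_seq Q \<epsilon>' ss' as' (enat k)" "pi_traj Q \<pi> ss' as' (enat k)"
    "\<forall>i. enat i \<le> enat k \<longrightarrow> bar (ss' i) = bs' i" "ss' 0 = ss m"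
    using realize[OF wf t'(1) fin_Dset_finite stm t'(2)[symmetric]] by blast
  have "is_goal Q (ss' k)"
    using goal_bar[of Q "ss' k"] r(1,3) t'(3) by (simp add: eps_seq_def)
  then show "\<exists>ss' as' k. trajectory Q ss' as' (enat k) \<and> pi_traj Q \<pi> ss' as' (enat k) \<and>
                  ss' 0 = ss m \<and> is_goal Q (ss' k)"
    using ep r unfolding trajectory_def by blast
qed

theorem theorem5:
  fixes Q :: "('f, 'v, 'a) qnp" and \<pi> :: "('f, 'v, 'a) policy"
  assumes "wf_qnp Q" and "is_policy Q \<pi>"
  shows "(solves \<pi> Q \<longleftrightarrow> strong_cyclic_Q \<pi> Q \<and> Q_terminating \<pi> Q) \<and>
         (strong_cyclic_Q \<pi> Q \<and> Q_terminating \<pi> Q \<longleftrightarrow> strong_cyclic_TD \<pi> Q \<and> TD_terminating \<pi> Q)"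
  using solves_term solves_sc[OF assms] sc_term_solves scQ_scTD[OF assms(1)] scTD_scQ[OF assms(1)]
    Qterm_TDterm[OF assms(1)] TD_term_Q_term[OF assms(1)]
  by blast

end
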